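(* Let $G$ be an undirected graph on vertex set $[m]$ with symmetric adjacency matrix $\mathcal{A}\in\{0,1\}^{m\times m}$, each vertex $i$ having a single attribute value $a_i\in[K]$ with one-hot encoding $h_i\in\{0,1\}^K$. Let $W\in\mathbb{R}^{r\times K}$, $f_i=Wh_i$, let $S:\mathbb{R}^r\times\mathbb{R}^r\to\mathbb{R}$ be any function, and let $\mathbf{S}\in\mathbb{R}^{m\times m}$ have entries $\mathbf{S}_{ji}=S(f_j,f_i)$. Let $F_{(1)}\in\mathbb{R}^{r\times m}$ be the matrix with columns $f_1,\dots,f_m$, and for $n\ge2$ let $F_{(n)}=\big(F_{(n-1)}(\mathcal{A}\odot\mathbf{S})\big)\odot F_{(1)}$; let $f_{(n)}=F_{(n)}\mathbf{1}$ with $\mathbf{1}\in\mathbb{R}^m$ the all-ones vector. Then for every $n\ge1$, $$f_{(n)}=W^{[n]}\,\Lambda_{(n)}\,c_{(n)}(G),$$ and consequently, for every $T\ge1$, $f_{[T]}=\mathcal{M}\Lambda c_{[T]}(G)$, where $f_{[T]}$ is the concatenation $[f_{(1)};\dots;f_{(T)}]$, $c_{[T]}$ is the concatenation $[c_{(1)};\dots;c_{(T)}]$, $\mathcal{M}$ is block-diagonal with diagonal blocks $W^{[1]},\dots,W^{[T]}$, and $\Lambda$ is block-diagonal with diagonal blocks $\Lambda_{(1)},\dots,\Lambda_{(T)}$.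
   Context: For $u\in[K]$ let $W(u)$ be the $u$-th column of $W$. A walk of length $n$ is a sequence of vertices $(p_1,\dots,p_n)$ with $\mathcal{A}_{p_k,p_{k+1}}=1$ for all $k<n$; its walk type is $(a_{p_1},\dots,a_{p_n})\in[K]^n$. The walk statistics vector $c_{(n)}(G)\in\mathbb{R}^{K^n}$ has entries indexed by walk types $v\in[K]^n$, the entry at $v$ being the number of walks of length $n$ in $G$ of type $v$. The walk weight of $v=(v_1,\dots,v_n)$ is $\lambda(v)=\prod_{k=1}^{n-1}S\big(W(v_{k+1}),W(v_k)\big)$ (equal to $1$ if $n=1$); $\Lambda_{(n)}$ is the $K^n\times K^n$ diagonal matrix with diagonal entry $\lambda(v)$ at index $v$. For a $d\times N$ matrix $A$ with columns $A_1,\dots,A_N$, its $\ell$-way column product $A^{[\ell]}$ is the $d\times N^\ell$ matrix whose column indexed by $(i_1,\dots,i_\ell)\in[N]^\ell$ is $A_{i_1}\odot\cdots\odot A_{i_\ell}$. $\odot$ denotes the entrywise product; the index orderings of $c_{(n)}$, $\Lambda_{(n)}$ and the columns of $W^{[n]}$ are the same. *)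

theory Defs
  imports "HOL-Analysis.Analysis"
begin

(* Vertices: finite type 'm (the set [m]); attribute values: finite type 'k (the set [K]);
   feature dimension: finite type 'r.  Adjacency matrix A :: real^'m^'m with 0/1 entries. *)

definition onehot :: "'k::finite \<Rightarrow> real^'k" where
  "onehot u = axis u 1"

definition feat :: "real^'k::finite^'r::finite \<Rightarrow> ('m \<Rightarrow> 'k) \<Rightarrow> 'm \<Rightarrow> real^'r" where
  "feat W a i = W *v onehot (a i)"

definition hadamard :: "real^'n::finite^'p::finite \<Rightarrow> real^'n^'p \<Rightarrow> real^'n^'p" where
  "hadamard X Y = (\<chi> i j. X$i$j * Y$i$j)"

definition Smat :: "(real^'r \<Rightarrow> real^'r \<Rightarrow> real) \<Rightarrow> real^'k::finite^'r::finite \<Rightarrow> ('m::finite \<Rightarrow> 'k) \<Rightarrow> real^'m^'m" where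
  "Smat S W a = (\<chi> j i. S (feat W a j) (feat W a i))"

definition F1 :: "real^'k::finite^'r::finite \<Rightarrow> ('m::finite \<Rightarrow> 'k) \<Rightarrow> real^'m^'r" where
  "F1 W a = (\<chi> j i. feat W a i $ j)"

text \<open>F_(n) for n >= 1 (the value at n = 0 is a junk value and never used).\<close>
fun Fn :: "real^'m::finite^'m \<Rightarrow> (real^'r \<Rightarrow> real^'r \<Rightarrow> real) \<Rightarrow> real^'k::finite^'r::finite
           \<Rightarrow> ('m \<Rightarrow> 'k) \<Rightarrow> nat \<Rightarrow> real^'m^'r" where
  "Fn A S W a 0 = F1 W a"
| "Fn A S W a (Suc 0) = F1 W a"
| "Fn A S W a (Suc (Suc n)) = hadamard (Fn A S W a (Suc n) ** hadamard A (Smat S W a)) (F1 W a)"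

definition fvec :: "real^'m::finite^'m \<Rightarrow> (real^'r \<Rightarrow> real^'r \<Rightarrow> real) \<Rightarrow> real^'k::finite^'r::finite
           \<Rightarrow> ('m \<Rightarrow> 'k) \<Rightarrow> nat \<Rightarrow> real^'r" where
  "fvec A S W a n = Fn A S W a n *v (\<chi> i. 1)"

text \<open>Walk types of length n: [K]^n, represented as lists of length n.\<close>
definition walk_types :: "nat \<Rightarrow> 'k list set" where
  "walk_types n = {v. length v = n}"

definition is_walk :: "real^'m::finite^'m \<Rightarrow> 'm list \<Rightarrow> bool" where
  "is_walk A p \<longleftrightarrow> (\<forall>k. Suc k < length p \<longrightarrow> A $ (p!k) $ (p!Suc k) = 1)"

definition walk_stats :: "real^'m::finite^'m \<Rightarrow> ('m \<Rightarrow> 'k) \<Rightarrow> nat \<Rightarrow> 'k list \<Rightarrow> real" where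
  "walk_stats A a n v = real (card {p. length p = n \<and> is_walk A p \<and> map a p = v})"

definition walk_weight :: "(real^'r \<Rightarrow> real^'r \<Rightarrow> real) \<Rightarrow> real^'k::finite^'r::finite \<Rightarrow> 'k list \<Rightarrow> real" where
  "walk_weight S W v = (\<Prod>k<length v - 1. S (column (v!(Suc k)) W) (column (v!k) W))"

definition Lambda_n :: "(real^'r \<Rightarrow> real^'r \<Rightarrow> real) \<Rightarrow> real^'k::finite^'r::finite \<Rightarrow> nat
                        \<Rightarrow> 'k list \<Rightarrow> 'k list \<Rightarrow> real" where
  "Lambda_n S W n v w = (if v = w then walk_weight S W v else 0)"

text \<open>The n-way column product W^[n]: row j, column indexed by (i_1,...,i_n) is
  (W(i_1) .* ... .* W(i_n))_j  (used on column index set walk_types n).\<close>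
definition colprod :: "real^'k::finite^'r::finite \<Rightarrow> nat \<Rightarrow> 'r \<Rightarrow> 'k list \<Rightarrow> real" where
  "colprod W n j v = (\<Prod>k<n. (column (v!k) W) $ j)"

definition mv :: "'b set \<Rightarrow> ('a \<Rightarrow> 'b \<Rightarrow> real) \<Rightarrow> ('b \<Rightarrow> real) \<Rightarrow> 'a \<Rightarrow> real" where
  "mv I M x i = (\<Sum>j\<in>I. M i j * x j)"

text \<open>Concatenated objects for T >= 1.  Rows of f_[T] / M are indexed by pairs (t,j),
  t in {1..T}, j in [r]; columns of M, rows/columns of Lambda, entries of c_[T] are
  indexed by walk types of length 1..T (the disjoint union of the [K]^t).\<close>
definition walk_types_upto :: "nat \<Rightarrow> 'k list set" where
  "walk_types_upto T = {v. 1 \<le> length v \<and> length v \<le> T}"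

definition fcat :: "real^'m::finite^'m \<Rightarrow> (real^'r \<Rightarrow> real^'r \<Rightarrow> real) \<Rightarrow> real^'k::finite^'r::finite
           \<Rightarrow> ('m \<Rightarrow> 'k) \<Rightarrow> nat \<times> 'r::finite \<Rightarrow> real" where
  "fcat A S W a tj = fvec A S W a (fst tj) $ snd tj"

definition ccat :: "real^'m::finite^'m \<Rightarrow> ('m \<Rightarrow> 'k) \<Rightarrow> 'k list \<Rightarrow> real" where
  "ccat A a v = walk_stats A a (length v) v"

definition Mblk :: "real^'k::finite^'r::finite \<Rightarrow> nat \<times> 'r \<Rightarrow> 'k list \<Rightarrow> real" where
  "Mblk W tj v = (if length v = fst tj then colprod W (fst tj) (snd tj) v else 0)"

definition Lblk :: "(real^'r \<Rightarrow> real^'r \<Rightarrow> real) \<Rightarrow> real^'k::finite^'r::finite \<Rightarrow> 'k list \<Rightarrow> 'k list \<Rightarrow> real" where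
  "Lblk S W v w = (if length v = length w then Lambda_n S W (length v) v w else 0)"

end

theory Submission
  imports Defs
begin

lemma feat_col: "feat W a x $ j = column (a x) W $ j"
  by (simp add: feat_def onehot_def column_def matrix_vector_mult_def axis_def if_distrib cong: if_cong)

lemma feat_eq: "feat W a x = column (a x) W"
  by (simp add: vec_eq_iff feat_col)

fun wt :: "real^'m::finite^'m \<Rightarrow> (real^'r \<Rightarrow> real^'r \<Rightarrow> real) \<Rightarrow> real^'k::finite^'r::finite
           \<Rightarrow> ('m \<Rightarrow> 'k) \<Rightarrow> 'r \<Rightarrow> 'm list \<Rightarrow> real" where
  "wt A S W a j [] = 0"
| "wt A S W a j [x] = feat W a x $ j"
| "wt A S W a j (x # y # r) = feat W a x $ j * (A $ y $ x * S (feat W a y) (feat W a x)) * wt A S W a j (y # r)"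

lemma finite_len: "finite {q :: 'a::finite list. length q = n}"
  using finite_lists_length_eq[of "UNIV :: 'a set" n] by simp

lemma img_cons: "{q. length q = Suc n \<and> hd q = i} = (\<lambda>r. i # r) ` {r. length r = n}"
  apply (auto simp: length_Suc_conv image_def)
  done

lemma Fn_eq:
  "Fn A S W a (Suc n) $ j $ i = (\<Sum>q\<in>{q. length q = Suc n \<and> hd q = i}. wt A S W a j q)"
proof (induction n arbitrary: i)
  case 0
  have "{q. length q = Suc 0 \<and> hd q = i} = {[i]}"
    by (auto simp: length_Suc_conv)
  then show ?case by (simp add: F1_def)
next
  case (Suc n)
  have "(\<Sum>q\<in>{q. length q = Suc (Suc n) \<and> hd q = i}. wt A S W a j q)
      = (\<Sum>r\<in>{r. length r = Suc n}. wt A S W a j (i # r))"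
    unfolding img_cons by (subst sum.reindex) (auto simp: inj_on_def)
  also have "\<dots> = (\<Sum>r\<in>{r. length r = Suc n}. feat W a i $ j * (A $ hd r $ i * S (feat W a (hd r)) (feat W a i)) * wt A S W a j r)"
    by (rule sum.cong) (auto simp: length_Suc_conv)
  also have "\<dots> = (\<Sum>l\<in>UNIV. \<Sum>r\<in>{r\<in>{r. length r = Suc n}. hd r = l}. feat W a i $ j * (A $ hd r $ i * S (feat W a (hd r)) (feat W a i)) * wt A S W a j r)"
    by (rule sum.group[symmetric]) (auto simp: finite_len)
  also have "\<dots> = (\<Sum>l\<in>UNIV. feat W a i $ j * (A $ l $ i * S (feat W a l) (feat W a i)) * Fn A S W a (Suc n) $ j $ l)"
    by (simp add: Suc.IH sum_distrib_left)
  also have "\<dots> = Fn A S W a (Suc (Suc n)) $ j $ i"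
    by (simp add: hadamard_def matrix_matrix_mult_def Smat_def F1_def sum_distrib_left mult_ac)
  finally show ?case by simp
qed

lemma is_walk_cons2: "is_walk A (x # y # r) \<longleftrightarrow> A $ x $ y = 1 \<and> is_walk A (y # r)"
proof -
  have "is_walk A (x # y # r) \<longleftrightarrow> (\<forall>k. Suc k < length (x # y # r) \<longrightarrow> A $ ((x#y#r)!k) $ ((x#y#r)!Suc k) = 1)"
    by (simp add: is_walk_def)
  also have "\<dots> \<longleftrightarrow> A $ x $ y = 1 \<and> (\<forall>k. Suc k < length (y # r) \<longrightarrow> A $ ((y#r)!k) $ ((y#r)!Suc k) = 1)"
    apply (rule iffI)
     apply (intro conjI allI impI)
      apply (erule allE[of _ 0]; simp)
     apply (erule_tac x="Suc k" in allE; simp)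
    apply (intro allI impI)
    apply (case_tac k; simp)
    done
  finally show ?thesis by (simp add: is_walk_def)
qed

lemma colprod_cons: "colprod W (Suc n) j (u # v) = column u W $ j * colprod W n j v"
  unfolding colprod_def by (subst prod.lessThan_Suc_shift) simp

lemma ww_cons2: "walk_weight S W (u # w # v) = S (column w W) (column u W) * walk_weight S W (w # v)"
  unfolding walk_weight_def by (simp del: prod.lessThan_Suc add: prod.lessThan_Suc_shift)

lemma wt_formula:
  assumes A01: "\<forall>i j. A $ i $ j = 0 \<or> A $ i $ j = 1"
    and Asym: "\<forall>i j. A $ i $ j = A $ j $ i"
  shows "wt A S W a j (x # r) = (if is_walk A (x # r) then 1 else 0) * (colprod W (length (x # r)) j (map a (x # r)) * walk_weight S W (map a (x # r)))"
proof (induction r arbitrary: x)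
  case Nil
  then show ?case by (simp add: colprod_def walk_weight_def is_walk_def feat_col)
next
  case (Cons y r)
  have e: "A $ y $ x = (if A $ x $ y = 1 then 1 else 0)"
    using A01 Asym by metis
  show ?case
    apply (simp only: wt.simps Cons.IH)
    apply (simp only: list.map length_Cons colprod_cons ww_cons2 is_walk_cons2 e feat_eq)
    apply (simp add: mult_ac)
    done
qed

lemma finite_upto: "finite (walk_types_upto T :: 'a::finite list set)"
  by (rule finite_subset[OF _ finite_lists_length_le[of "UNIV :: 'a set" T]]) (auto simp: walk_types_upto_def)

lemma part1:
  fixes A :: "real^'m::finite^'m"
    and a :: "'m \<Rightarrow> 'k::finite"
    and W :: "real^'k^'r::finite"
    and S :: "real^'r \<Rightarrow> real^'r \<Rightarrow> real"
  assumes A01: "\<forall>i j. A $ i $ j = 0 \<or> A $ i $ j = 1"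
    and Asym: "\<forall>i j. A $ i $ j = A $ j $ i"
    and n1: "n \<ge> 1"
  shows "fvec A S W a n $ j
            = (\<Sum>v\<in>walk_types n. colprod W n j v * walk_weight S W v * walk_stats A a n v)"
proof -
  obtain m where nm: "n = Suc m" using n1 by (cases n) auto
  define g where "g v = colprod W n j v * walk_weight S W v" for v
  define Wk where "Wk = {q. length q = n \<and> is_walk A q}"
  have fWk: "finite Wk" unfolding Wk_def
    by (rule finite_subset[OF _ finite_len[of n]]) auto
  have "fvec A S W a n $ j = (\<Sum>i\<in>UNIV. \<Sum>q\<in>{q\<in>{q. length q = n}. hd q = i}. wt A S W a j q)"
    by (simp add: fvec_def matrix_vector_mult_def nm Fn_eq)
  also have "\<dots> = (\<Sum>q\<in>{q. length q = n}. wt A S W a j q)"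
    by (rule sum.group) (auto simp: finite_len)
  also have "\<dots> = (\<Sum>q\<in>{q. length q = n}. if is_walk A q then g (map a q) else 0)"
  proof (rule sum.cong)
    fix q :: "'m list" assume "q \<in> {q. length q = n}"
    then obtain x r where "q = x # r" using nm by (cases q) auto
    then show "wt A S W a j q = (if is_walk A q then g (map a q) else 0)"
      using wt_formula[OF A01 Asym, of S W a j x r] \<open>q \<in> _\<close> by (simp add: g_def)
  qed simp
  also have "\<dots> = (\<Sum>q\<in>Wk. g (map a q))"
  proof -
    have "Wk = {q\<in>{q. length q = n}. is_walk A q}" by (simp add: Wk_def)
    then show ?thesis using sum.inter_filter[OF finite_len[of n], of "\<lambda>q. g (map a q)" "is_walk A"] by simp
  qed
  also have "\<dots> = (\<Sum>v\<in>walk_types n. \<Sum>q\<in>{q\<in>Wk. map a q = v}. g (map a q))"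
    by (rule sum.group[symmetric]) (use fWk in \<open>auto simp: finite_len walk_types_def Wk_def\<close>)
  also have "\<dots> = (\<Sum>v\<in>walk_types n. g v * walk_stats A a n v)"
  proof (rule sum.cong)
    fix v :: "'k list"
    have "(\<Sum>q\<in>{q\<in>Wk. map a q = v}. g (map a q)) = (\<Sum>q\<in>{q\<in>Wk. map a q = v}. g v)"
      by simp
    also have "\<dots> = g v * real (card {q\<in>Wk. map a q = v})" by simp
    also have se: "{q\<in>Wk. map a q = v} = {p. length p = n \<and> is_walk A p \<and> map a p = v}"
      by (auto simp: Wk_def)
    finally show "(\<Sum>q\<in>{q\<in>Wk. map a q = v}. g (map a q)) = g v * walk_stats A a n v"
      by (simp add: walk_stats_def se)
  qed simp
  finally show ?thesis by (simp add: g_def)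
qed

theorem theorem1:
  fixes A :: "real^'m::finite^'m"
    and a :: "'m \<Rightarrow> 'k::finite"
    and W :: "real^'k^'r::finite"
    and S :: "real^'r \<Rightarrow> real^'r \<Rightarrow> real"
  assumes A01: "\<forall>i j. A $ i $ j = 0 \<or> A $ i $ j = 1"
    and Asym: "\<forall>i j. A $ i $ j = A $ j $ i"
  shows "(\<forall>n\<ge>1. \<forall>j. fvec A S W a n $ j
            = mv (walk_types n) (colprod W n) (mv (walk_types n) (Lambda_n S W n) (walk_stats A a n)) j)
       \<and> (\<forall>T\<ge>1. \<forall>t\<in>{1..T}. \<forall>j. fcat A S W a (t, j)
            = mv (walk_types_upto T) (Mblk W) (mv (walk_types_upto T) (Lblk S W) (ccat A a)) (t, j))"
proof (intro conjI allI impI ballI)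
  fix n :: nat and j assume n1: "n \<ge> 1"
  have inner: "mv (walk_types n) (Lambda_n S W n) (walk_stats A a n) v = walk_weight S W v * walk_stats A a n v"
    if "v \<in> walk_types n" for v
  proof -
    have "mv (walk_types n) (Lambda_n S W n) (walk_stats A a n) v = (\<Sum>w\<in>walk_types n. if v = w then walk_weight S W v * walk_stats A a n w else 0)"
      unfolding mv_def Lambda_n_def by (rule sum.cong) auto
    also have "\<dots> = walk_weight S W v * walk_stats A a n v"
      using that by (simp add: sum.delta' finite_len walk_types_def)
    finally show ?thesis .
  qed
  show "fvec A S W a n $ j
            = mv (walk_types n) (colprod W n) (mv (walk_types n) (Lambda_n S W n) (walk_stats A a n)) j"
    unfolding part1[OF A01 Asym n1] mv_def by (rule sum.cong) (simp_all add: inner[unfolded mv_def])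
next
  fix T t :: nat and j assume T1: "T \<ge> 1" and t: "t \<in> {1..T}"
  have inner: "mv (walk_types_upto T) (Lblk S W) (ccat A a) v = walk_weight S W v * walk_stats A a (length v) v"
    if "v \<in> walk_types_upto T" for v
  proof -
    have "mv (walk_types_upto T) (Lblk S W) (ccat A a) v = (\<Sum>w\<in>walk_types_upto T. if v = w then walk_weight S W v * walk_stats A a (length v) w else 0)"
      unfolding mv_def Lblk_def Lambda_n_def ccat_def by (rule sum.cong) auto
    also have "\<dots> = walk_weight S W v * walk_stats A a (length v) v"
      using that by (simp add: sum.delta' finite_upto)
    finally show ?thesis .
  qed
  have "mv (walk_types_upto T) (Mblk W) (mv (walk_types_upto T) (Lblk S W) (ccat A a)) (t, j)
      = (\<Sum>v\<in>walk_types_upto T. if length v = t then colprod W t j v * walk_weight S W v * walk_stats A a t v else 0)"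
    unfolding mv_def by (rule sum.cong) (auto simp: inner[unfolded mv_def] Mblk_def)
  also have "\<dots> = (\<Sum>v\<in>{v\<in>walk_types_upto T. length v = t}. colprod W t j v * walk_weight S W v * walk_stats A a t v)"
    by (rule sum.inter_filter[symmetric]) (simp add: finite_upto)
  also have "{v\<in>walk_types_upto T. length v = t} = walk_types t"
    using t by (auto simp: walk_types_upto_def walk_types_def)
  also have "(\<Sum>v\<in>walk_types t. colprod W t j v * walk_weight S W v * walk_stats A a t v) = fvec A S W a t $ j"
    using part1[OF A01 Asym, of t S W a j] t by simp
  finally show "fcat A S W a (t, j)
            = mv (walk_types_upto T) (Mblk W) (mv (walk_types_upto T) (Lblk S W) (ccat A a)) (t, j)"
    by (simp add: fcat_def)
qed

end
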